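(* For all $n\ge 0$, $$S_n(x)=\frac{1}{2^n}\sum_{k=0}^n\binom{n}{k}\widehat{W}_k(2x)\,\widehat{W}_{n-k}(2x).$$
   Context: For a permutation $\pi$ of $[n]=\{1,\dots,n\}$, ${\rm des}(\pi)=\#\{i\in[n-1]:\pi(i)>\pi(i+1)\}$. A double descent is an index $i\in[n-2]$ with $\pi(i)>\pi(i+1)>\pi(i+2)$. The permutation $\pi$ is simsun if for every $k\in[n]$, the subword of $\pi$ consisting of the letters in $[k]$ (in order of appearance) has no double descents. Let $\mathcal{RS}_n$ be the set of simsun permutations of $[n]$ and $S_n(x)=\sum_{\pi\in\mathcal{RS}_n}x^{{\rm des}(\pi)}$, with $S_0(x)=1$. A left peak of $\pi\in\mathfrak S_n$ is an index $i\in[n-1]$ with $\pi(i-1)<\pi(i)>\pi(i+1)$, where $\pi(0)=0$; ${\rm lpk}(\pi)$ is the number of left peaks, and $\widehat W_n(x)=\sum_{\pi\in\mathfrak S_n}x^{{\rm lpk}(\pi)}$, with $\widehat W_0(x)=1$. *)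

theory Defs
  imports Complex_Main "HOL-Combinatorics.Permutations"
begin

definition perm_word :: "nat \<Rightarrow> (nat \<Rightarrow> nat) \<Rightarrow> nat list" where
  "perm_word n p = map p [1..<n+1]"

definition des_word :: "nat list \<Rightarrow> nat" where
  "des_word w = card {i. i + 1 < length w \<and> w ! i > w ! (i+1)}"

definition no_double_descent :: "nat list \<Rightarrow> bool" where
  "no_double_descent w \<longleftrightarrow>
     (\<forall>i. i + 2 < length w \<longrightarrow> \<not> (w ! i > w ! (i+1) \<and> w ! (i+1) > w ! (i+2)))"

definition simsun :: "nat \<Rightarrow> (nat \<Rightarrow> nat) \<Rightarrow> bool" where
  "simsun n p \<longleftrightarrow>
     (\<forall>k\<in>{1..n}. no_double_descent (filter (\<lambda>a. a \<le> k) (perm_word n p)))"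

definition des :: "nat \<Rightarrow> (nat \<Rightarrow> nat) \<Rightarrow> nat" where
  "des n p = des_word (perm_word n p)"

definition lpk :: "nat \<Rightarrow> (nat \<Rightarrow> nat) \<Rightarrow> nat" where
  "lpk n p = card {i\<in>{1..n-1}. (if i = 1 then 0 else p (i-1)) < p i \<and> p i > p (i+1)}"

(* S_n(x); for n = 0 the only permutation of the empty set gives 1 *)
definition S_poly :: "nat \<Rightarrow> real \<Rightarrow> real" where
  "S_poly n x = (\<Sum>p\<in>{p. p permutes {1..n} \<and> simsun n p}. x ^ des n p)"

definition W_hat :: "nat \<Rightarrow> real \<Rightarrow> real" where
  "W_hat n x = (\<Sum>p\<in>{p. p permutes {1..n}}. x ^ lpk n p)"

end

theory Submission
  imports Defs
begin


fun desr :: "nat list \<Rightarrow> nat" where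
  "desr (a#b#r) = (if a > b then 1 else 0) + desr (b#r)"
| "desr _ = 0"

fun nddr :: "nat list \<Rightarrow> bool" where
  "nddr (a#b#c#r) = (\<not>(a > b \<and> b > c) \<and> nddr (b#c#r))"
| "nddr _ = True"

fun pkf :: "nat \<Rightarrow> nat list \<Rightarrow> nat" where
  "pkf p (a#b#r) = (if p < a \<and> a > b then 1 else 0) + pkf a (b#r)"
| "pkf p _ = 0"

fun ins_all :: "nat \<Rightarrow> nat list \<Rightarrow> nat list list" where
  "ins_all m [] = [[m]]"
| "ins_all m (a#ys) = (m#a#ys) # map ((#) a) (ins_all m ys)"

lemma pkf_le: "\<not> q < b \<Longrightarrow> pkf q (b#r) = pkf b r"
  by (cases r) auto

lemma GW:
  fixes x :: real
  assumes "p < m" "\<forall>a\<in>set ys. a < m"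
  shows "sum_list (map (\<lambda>z. x ^ pkf p z) (ins_all m ys)) =
    (2 * pkf p ys + 1) * x ^ pkf p ys + (real (length ys) - 2 * pkf p ys) * x ^ (pkf p ys + 1)"
  using assms
proof (induction ys arbitrary: p)
  case Nil
  then show ?case by simp
next
  case (Cons a ys')
  show ?case
  proof (cases ys')
    case Nil
    then show ?thesis using Cons.prems by simp
  next
    case (Cons b r)
    have am: "a < m" "b < m" using Cons.prems \<open>ys' = b#r\<close> by auto
    have IH: "sum_list (map (\<lambda>z. x ^ pkf a z) (ins_all m (b#r))) =
      (2 * pkf a (b#r) + 1) * x ^ pkf a (b#r) + (real (length (b#r)) - 2 * pkf a (b#r)) * x ^ (pkf a (b#r) + 1)"
      using Cons.IH[of a] am Cons.prems \<open>ys' = b#r\<close> by auto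
    have e1: "pkf a (m#b#r) = 1 + pkf m (b#r)" using am by simp
    have e2: "pkf m (b#r) = pkf b r" using am by (intro pkf_le) simp
    have split: "sum_list (map (\<lambda>z. x ^ pkf p z) (ins_all m (a#b#r))) =
       x ^ (1 + pkf a (b#r)) + x ^ pkf a (m#b#r) +
       x ^ (if p < a \<and> a > b then 1 else 0) * sum_list (map (\<lambda>z. x ^ pkf a z) (map ((#) b) (ins_all m r)))"
      using am Cons.prems
      by (simp add: o_def power_add sum_list_const_mult[symmetric] pkf_le)
    have IH': "sum_list (map (\<lambda>z. x ^ pkf a z) (map ((#) b) (ins_all m r))) =
       (2 * pkf a (b#r) + 1) * x ^ pkf a (b#r) + (real (length (b#r)) - 2 * pkf a (b#r)) * x ^ (pkf a (b#r) + 1)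
       - x ^ pkf a (m#b#r)"
      using IH by simp
    define T where "T = sum_list (map (\<lambda>z. x ^ pkf a z) (map ((#) b) (ins_all m r)))"
    define l where "l = pkf a (b#r)"
    have Tv: "T = (2 * l + 1) * x ^ l + (real (length (b#r)) - 2 * l) * x ^ (l + 1) - x ^ pkf a (m#b#r)"
      using IH' unfolding T_def l_def .
    have eq: "sum_list (map (\<lambda>z. x ^ pkf p z) (ins_all m (a#b#r))) =
       x ^ (1 + l) + x ^ pkf a (m#b#r) + x ^ (if p < a \<and> a > b then 1 else 0) * T"
      using split unfolding T_def l_def .
    have fin: "x ^ (1 + l) + x ^ pkf a (m#b#r) + x ^ (if p < a \<and> a > b then 1 else 0) * T =
    (2 * pkf p (a#b#r) + 1) * x ^ pkf p (a#b#r) + (real (length (a#b#r)) - 2 * pkf p (a#b#r)) * x ^ (pkf p (a#b#r) + 1)"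
    proof (cases "p < a \<and> a > b")
      case True
      have "pkf a (b#r) = pkf b r" using True by (intro pkf_le) simp
      then have pm: "pkf a (m#b#r) = l + 1" "pkf p (a#b#r) = l + 1" using e1 e2 True unfolding l_def by simp_all
      have T2: "T = (2*l+1)*x^l + (real(length(b#r)) - 2*l)*x^(l+1) - x^(l+1)" using Tv pm by simp
      show ?thesis unfolding T2 using pm True
        by (simp add: algebra_simps)
    next
      case False
      then have pm: "pkf p (a#b#r) = l" unfolding l_def by simp
      show ?thesis unfolding Tv using pm False am by (auto simp add: algebra_simps)
    qed
    show ?thesis using eq fin \<open>ys' = b#r\<close> by simp
  qed
qed

lemma ins_all_hd: "z \<in> set (ins_all m r) \<Longrightarrow> z \<noteq> [] \<and> (hd z = m \<or> (r \<noteq> [] \<and> hd z = hd r))"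
  by (induction r) auto

lemma nddr_tl: "nddr (a#ys) \<Longrightarrow> nddr ys"
  by (cases ys rule: nddr.cases) auto

lemma GS_step:
  fixes x :: real
  assumes "z' \<in> set (ins_all m r)" "nddr (a#b#r)" "b < m"
  shows "(if nddr (a#b#z') then x ^ desr (a#b#z') else 0) =
     x ^ (if a > b then 1 else 0) * (if nddr (b#z') then x ^ desr (b#z') else 0)"
proof -
  obtain c z'' where z: "z' = c # z''" using ins_all_hd[OF assms(1)] by (cases z') auto
  have "a > b \<Longrightarrow> \<not> b > c"
    using ins_all_hd[OF assms(1)] assms(2,3) z by (cases r) auto
  then show ?thesis using z by (auto simp: power_add)
qed

lemma GS:
  fixes x :: real
  assumes "nddr ys" "\<forall>a\<in>set ys. a < m"
  shows "sum_list (map (\<lambda>z. if nddr z then x ^ desr z else 0) (ins_all m ys)) =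
    (desr ys + 1) * x ^ desr ys + (real (length ys) - 2 * desr ys) * x ^ (desr ys + 1)"
  using assms
proof (induction ys)
  case Nil
  then show ?case by simp
next
  case (Cons a ys')
  show ?case
  proof (cases ys')
    case Nil
    then show ?thesis using Cons.prems by simp
  next
    case (Cons b r)
    have am: "a < m" "b < m" using Cons.prems \<open>ys' = b#r\<close> by auto
    have nd: "nddr (a#b#r)" using Cons.prems \<open>ys' = b#r\<close> by simp
    define f where "f = (\<lambda>z. if nddr z then x ^ desr z else (0::real))"
    define T where "T = sum_list (map f (map ((#) b) (ins_all m r)))"
    define d where "d = desr (b#r)"
    have IH: "f (m#b#r) + T = (d + 1) * x ^ d + (real (length (b#r)) - 2 * d) * x ^ (d + 1)"
      using Cons.IH nd am Cons.prems nddr_tl[OF nd] \<open>ys' = b#r\<close> unfolding T_def d_def f_def by simp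
    have st: "sum_list (map f (map ((#) a) (map ((#) b) (ins_all m r)))) =
       x ^ (if a > b then 1 else 0) * T"
      unfolding T_def sum_list_const_mult[symmetric] map_map o_def
      by (rule arg_cong[where f=sum_list], rule map_cong[OF refl])
         (unfold f_def, rule GS_step[OF _ nd am(2)])
    have eq: "sum_list (map f (ins_all m (a#b#r))) = f (m#a#b#r) + f (a#m#b#r) + x ^ (if a > b then 1 else 0) * T"
      using st by simp
    have f2: "f (a#m#b#r) = f (m#b#r)" unfolding f_def using am by simp
    have fin: "f (m#a#b#r) + f (a#m#b#r) + x ^ (if a > b then 1 else 0) * T =
      (desr (a#b#r) + 1) * x ^ desr (a#b#r) + (real (length (a#b#r)) - 2 * desr (a#b#r)) * x ^ (desr (a#b#r) + 1)"
    proof (cases "a > b")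
      case True
      have f1: "f (m#a#b#r) = 0" unfolding f_def using True am by simp
      have "nddr (m#b#r)" using nd True by (cases r) auto
      then have f3: "f (m#b#r) = x ^ (d+1)" unfolding f_def d_def using am by simp
      have T2: "T = (d + 1) * x ^ d + (real (length (b#r)) - 2 * d) * x ^ (d + 1) - x^(d+1)" using IH f3 by simp
      have dd: "desr (a#b#r) = d + 1" using True unfolding d_def by simp
      show ?thesis unfolding T2 f1 f2 f3 dd using True by (simp add: algebra_simps)
    next
      case False
      have f1: "f (m#a#b#r) = x ^ (d+1)" unfolding f_def d_def using False am nd by simp
      have T2: "T = (d + 1) * x ^ d + (real (length (b#r)) - 2 * d) * x ^ (d + 1) - f (m#b#r)" using IH by simp
      have dd: "desr (a#b#r) = d" using False unfolding d_def by simp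
      show ?thesis unfolding T2 f1 f2 dd using False by (simp add: algebra_simps)
    qed
    show ?thesis using eq fin \<open>ys' = b#r\<close> unfolding f_def by simp
  qed
qed



fun perms :: "nat \<Rightarrow> nat list list" where
  "perms 0 = [[]]"
| "perms (Suc n) = concat (map (ins_all (Suc n)) (perms n))"

lemma set_ins_all: "set (ins_all m ys) = {u @ m # v | u v. ys = u @ v}"
proof (induction ys)
  case Nil then show ?case by auto
next
  case (Cons a ys)
  show ?case
  proof
    show "set (ins_all m (a # ys)) \<subseteq> {u @ m # v |u v. a # ys = u @ v}"
    proof
      fix x assume "x \<in> set (ins_all m (a # ys))"
      then consider "x = m#a#ys" | z where "z \<in> set (ins_all m ys)" "x = a # z" by auto
      then show "x \<in> {u @ m # v |u v. a # ys = u @ v}"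
      proof cases
        case 1
        have "a # ys = [] @ (a#ys) \<and> x = [] @ m # (a#ys)" using 1 by simp
        then show ?thesis by blast
      next
        case 2
        then obtain u v where "ys = u @ v" "z = u @ m # v" using Cons by auto
        then have "a # ys = (a#u) @ v \<and> x = (a#u) @ m # v" using 2 by simp
        then show ?thesis by blast
      qed
    qed
    show "{u @ m # v |u v. a # ys = u @ v} \<subseteq> set (ins_all m (a # ys))"
    proof
      fix x assume "x \<in> {u @ m # v |u v. a # ys = u @ v}"
      then obtain u v where uv: "a # ys = u @ v" "x = u @ m # v" by blast
      show "x \<in> set (ins_all m (a # ys))"
      proof (cases u)
        case Nil then have "x = m # a # ys" using uv by simp
        then show ?thesis by simp
      next
        case (Cons c u')
        then have "c = a" "ys = u' @ v" "x = a # (u' @ m # v)" using uv by auto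
        moreover have "u' @ m # v \<in> set (ins_all m ys)" using Cons.IH \<open>ys = u' @ v\<close> by blast
        ultimately show ?thesis by simp
      qed
    qed
  qed
qed

lemma removeAll_ins: "m \<notin> set ys \<Longrightarrow> z \<in> set (ins_all m ys) \<Longrightarrow> removeAll m z = ys"
  by (induction ys arbitrary: z) auto

lemma distinct_ins: "m \<notin> set ys \<Longrightarrow> distinct (ins_all m ys)"
  by (induction ys) (auto simp: distinct_map)

lemma set_perms: "set (perms n) = {xs. distinct xs \<and> set xs = {1..n}}"
proof (induction n)
  case 0 then show ?case by auto
next
  case (Suc n)
  show ?case
  proof (intro set_eqI iffI)
    fix xs assume "xs \<in> set (perms (Suc n))"
    then obtain ys where ys: "ys \<in> set (perms n)" "xs \<in> set (ins_all (Suc n) ys)" by auto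
    then obtain u v where "ys = u @ v" "xs = u @ Suc n # v" using set_ins_all by blast
    moreover have "Suc n \<notin> set ys" using ys Suc by auto
    ultimately show "xs \<in> {xs. distinct xs \<and> set xs = {1..Suc n}}" using ys Suc by auto
  next
    fix xs assume a: "xs \<in> {xs. distinct xs \<and> set xs = {1..Suc n}}"
    then have "Suc n \<in> set xs" by auto
    then obtain u v where uv: "xs = u @ Suc n # v" by (meson split_list)
    have "distinct (u @ v)" "set (u @ v) = set xs - {Suc n}"
      using a uv by auto
    moreover have "set xs - {Suc n} = {1..n}" using a by auto
    ultimately have "distinct (u @ v)" "set (u @ v) = {1..n}" by auto
    then have "u @ v \<in> set (perms n)" using Suc by auto
    moreover have "xs \<in> set (ins_all (Suc n) (u @ v))" using uv set_ins_all by blast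
    ultimately show "xs \<in> set (perms (Suc n))" by auto
  qed
qed

lemma distinct_perms: "distinct (perms n)"
proof (induction n)
  case 0 then show ?case by simp
next
  case (Suc n)
  have nm: "\<And>ys. ys \<in> set (perms n) \<Longrightarrow> Suc n \<notin> set ys" using set_perms by auto
  have ne: "\<And>ys. ins_all m ys \<noteq> []" for m by (case_tac ys) auto
  have inj: "inj_on (ins_all (Suc n)) (set (perms n))"
  proof (rule inj_onI)
    fix ys zs assume "ys \<in> set (perms n)" "zs \<in> set (perms n)" "ins_all (Suc n) ys = ins_all (Suc n) zs"
    moreover have "(Suc n # ys) \<in> set (ins_all (Suc n) ys)" by (cases ys) auto
    ultimately show "ys = zs" using removeAll_ins nm by metis
  qed
  show ?case
    unfolding perms.simps distinct_concat_iff
  proof (intro conjI allI impI)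
    show "distinct (removeAll [] (map (ins_all (Suc n)) (perms n)))"
      using ne Suc inj by (simp add: distinct_map distinct_removeAll)
    show "\<And>ys. ys \<in> set (map (ins_all (Suc n)) (perms n)) \<Longrightarrow> distinct ys"
      using distinct_ins nm by auto
    fix ys zs assume "ys \<in> set (map (ins_all (Suc n)) (perms n)) \<and> zs \<in> set (map (ins_all (Suc n)) (perms n)) \<and> ys \<noteq> zs"
    then show "set ys \<inter> set zs = {}" using removeAll_ins nm by auto metis
  qed
qed

lemma card_shift: "finite {i. P i} \<Longrightarrow> card {i. P i} = (if P 0 then 1 else 0) + card {i. P (Suc i)}"
proof -
  assume f: "finite {i. P i}"
  have e: "{i. P i} = (if P 0 then {0} else {}) \<union> Suc ` {i. P (Suc i)}"
  proof (intro set_eqI iffI)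
    fix x assume "x \<in> {i. P i}" then show "x \<in> (if P 0 then {0} else {}) \<union> Suc ` {i. P (Suc i)}"
      by (cases x) auto
  qed (auto split: if_splits)
  have f2: "finite {i. P (Suc i)}"
  proof -
    have "{i. P (Suc i)} = Suc -` {i. P i}" by auto
    moreover have "finite (Suc -` {i. P i})" using finite_vimageI[OF f, of Suc] by simp
    ultimately show ?thesis by simp
  qed
  show ?thesis
    by (subst e, subst card_Un_disjoint) (auto simp: f2 card_image)
qed

lemma des_word_eq: "des_word w = desr w"
  unfolding des_word_def
proof (induction w rule: desr.induct)
  case (1 a b r)
  have "card {i. i + 1 < length (a#b#r) \<and> (a#b#r) ! i > (a#b#r) ! (i+1)} =
    (if a > b then 1 else 0) + card {i. i + 1 < length (b#r) \<and> (b#r) ! i > (b#r) ! (i+1)}"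
    by (subst card_shift) auto
  then show ?case using 1 by simp
qed auto

lemma pkf_card: "card {j. j+1 < length w \<and> (if j=0 then p else w!(j-1)) < w!j \<and> w!j > w!(j+1)} = pkf p w"
proof (induction p w rule: pkf.induct)
  case (1 p a b r)
  have "card {j. j+1 < length (a#b#r) \<and> (if j=0 then p else (a#b#r)!(j-1)) < (a#b#r)!j \<and> (a#b#r)!j > (a#b#r)!(j+1)} =
    (if p < a \<and> a > b then 1 else 0) + card {j. j+1 < length (b#r) \<and> (if j=0 then a else (b#r)!(j-1)) < (b#r)!j \<and> (b#r)!j > (b#r)!(j+1)}"
    by (subst card_shift) (auto simp: nth_Cons split: nat.splits intro!: arg_cong[where f=card])
  then show ?case using 1 by simp
qed auto

lemma wn: "j < n \<Longrightarrow> perm_word n p ! j = p (Suc j)"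
  unfolding perm_word_def by (simp del: upt_Suc)

lemma lpk_eq: "lpk n p = pkf 0 (perm_word n p)"
proof -
  let ?w = "perm_word n p"
  have lw: "length ?w = n" by (simp add: perm_word_def)
  have A: "{j. j+1 < length ?w \<and> (if j=0 then 0 else ?w!(j-1)) < ?w!j \<and> ?w!j > ?w!(j+1)} =
     {j. j+1 < n \<and> (if j=0 then 0 else p j) < p (Suc j) \<and> p (Suc j) > p (Suc (Suc j))}"
    using lw by (auto simp: wn)
  have B: "{i\<in>{1..n-1}. (if i = 1 then 0 else p (i-1)) < p i \<and> p i > p (i+1)} =
    Suc ` {j. j+1 < n \<and> (if j=0 then 0 else p j) < p (Suc j) \<and> p (Suc j) > p (Suc (Suc j))}"
  proof (intro set_eqI iffI)
    fix i assume "i \<in> {i\<in>{1..n-1}. (if i = 1 then 0 else p (i-1)) < p i \<and> p i > p (i+1)}"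
    then show "i \<in> Suc ` {j. j+1 < n \<and> (if j=0 then 0 else p j) < p (Suc j) \<and> p (Suc j) > p (Suc (Suc j))}"
      by (cases i) (auto simp: image_iff split: if_splits)
  next
    fix i assume "i \<in> Suc ` {j. j+1 < n \<and> (if j=0 then 0 else p j) < p (Suc j) \<and> p (Suc j) > p (Suc (Suc j))}"
    then show "i \<in> {i\<in>{1..n-1}. (if i = 1 then 0 else p (i-1)) < p i \<and> p i > p (i+1)}"
      by (auto split: if_splits)
  qed
  show ?thesis unfolding lpk_def B pkf_card[symmetric, of 0] A by (simp add: card_image)
qed

lemma ndd_eq: "no_double_descent w = nddr w"
  unfolding no_double_descent_def
proof (induction w rule: nddr.induct)
  case (1 a b c r)
  have "(\<forall>i. i + 2 < length (a#b#c#r) \<longrightarrow> \<not> ((a#b#c#r) ! i > (a#b#c#r) ! (i+1) \<and> (a#b#c#r) ! (i+1) > (a#b#c#r) ! (i+2))) =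
    (\<not>(a > b \<and> b > c) \<and> (\<forall>i. i + 2 < length (b#c#r) \<longrightarrow> \<not> ((b#c#r) ! i > (b#c#r) ! (i+1) \<and> (b#c#r) ! (i+1) > (b#c#r) ! (i+2))))"
    (is "(\<forall>i. ?P i) = _")
  proof -
    have "(\<forall>i. ?P i) = (?P 0 \<and> (\<forall>i. ?P (Suc i)))" by (metis not0_implies_Suc)
    then show ?thesis by simp
  qed
  then show ?case using 1 by simp
qed auto



definition ssl :: "nat \<Rightarrow> nat list \<Rightarrow> bool" where
  "ssl n z \<longleftrightarrow> (\<forall>k\<in>{1..n}. nddr (filter (\<lambda>a. a \<le> k) z))"

definition Pf :: "(nat list \<Rightarrow> bool) \<Rightarrow> (nat list \<Rightarrow> nat) \<Rightarrow> nat list list \<Rightarrow> real \<Rightarrow> real" where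
  "Pf g e L x = sum_list (map (\<lambda>z. if g z then x ^ e z else 0) L)"

definition Pd :: "(nat list \<Rightarrow> bool) \<Rightarrow> (nat list \<Rightarrow> nat) \<Rightarrow> nat list list \<Rightarrow> real \<Rightarrow> real" where
  "Pd g e L x = sum_list (map (\<lambda>z. if g z then real (e z) * x ^ (e z - 1) else 0) L)"

lemma Pf_deriv: "(Pf g e L has_real_derivative Pd g e L x) (at x)"
proof (induction L)
  case Nil
  then show ?case unfolding Pf_def Pd_def by simp
next
  case (Cons z L)
  have h: "((\<lambda>x. if g z then x ^ e z else 0) has_real_derivative (if g z then real (e z) * x ^ (e z - 1) else 0)) (at x)"
    by (cases "g z") (auto intro!: derivative_eq_intros)
  have "((\<lambda>x. (if g z then x ^ e z else 0) + Pf g e L x) has_real_derivative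
      (if g z then real (e z) * x ^ (e z - 1) else 0) + Pd g e L x) (at x)"
    by (rule DERIV_add[OF h Cons.IH])
  then show ?case unfolding Pf_def Pd_def by simp
qed

definition Wf where "Wf n = Pf (\<lambda>_. True) (pkf 0) (perms n)"
definition Wd where "Wd n = Pd (\<lambda>_. True) (pkf 0) (perms n)"
definition Sf where "Sf n = Pf (ssl n) desr (perms n)"
definition Sd where "Sd n = Pd (ssl n) desr (perms n)"

lemma length_perms: "z \<in> set (perms n) \<Longrightarrow> length z = n"
  using set_perms[of n] distinct_card[of z] by auto

lemma ssl_step:
  assumes ys: "ys \<in> set (perms n)" and z: "z \<in> set (ins_all (Suc n) ys)"
  shows "ssl (Suc n) z \<longleftrightarrow> ssl n ys \<and> nddr z"
proof -
  have sy: "set ys = {1..n}" using ys set_perms by auto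
  then have nm: "Suc n \<notin> set ys" by auto
  have ra: "removeAll (Suc n) z = ys" using removeAll_ins[OF nm z] .
  obtain u v where uv: "ys = u @ v" "z = u @ Suc n # v" using z set_ins_all by blast
  have sz: "set z = insert (Suc n) (set ys)" using uv by auto
  have f1: "filter (\<lambda>a. a \<le> Suc n) z = z" using sz sy by (auto simp: filter_id_conv)
  have f2: "filter (\<lambda>a. a \<le> k) z = filter (\<lambda>a. a \<le> k) ys" if "k \<le> n" for k
  proof -
    have "filter (\<lambda>a. a \<le> k) ys = filter (\<lambda>a. a \<le> k) (filter (\<lambda>y. Suc n \<noteq> y) z)"
      using ra by (simp add: removeAll_filter_not_eq)
    also have "\<dots> = filter (\<lambda>a. a \<le> k) z" using that by (simp add: filter_filter) (rule filter_cong, auto)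
    finally show ?thesis by simp
  qed
  have "ssl (Suc n) z \<longleftrightarrow> (\<forall>k\<in>{1..n}. nddr (filter (\<lambda>a. a \<le> k) z)) \<and> nddr (filter (\<lambda>a. a \<le> Suc n) z)"
    unfolding ssl_def by (auto simp: atLeastAtMostSuc_conv)
  also have "\<dots> \<longleftrightarrow> ssl n ys \<and> nddr z" unfolding ssl_def f1 using f2 by auto
  finally show ?thesis .
qed

lemma ssl_nddr: "ys \<in> set (perms n) \<Longrightarrow> ssl n ys \<Longrightarrow> nddr ys"
proof (cases n)
  case 0
  assume "ys \<in> set (perms n)" then show ?thesis using 0 by simp
next
  case (Suc m)
  assume a: "ys \<in> set (perms n)" "ssl n ys"
  have "filter (\<lambda>a. a \<le> n) ys = ys" using a(1) set_perms by (auto simp: filter_id_conv)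
  then show ?thesis using a(2) Suc unfolding ssl_def by (metis atLeastAtMost_iff le_add1 order_refl plus_1_eq_Suc)
qed

lemma sum_concat_map: "sum_list (map f (concat (map h L))) = sum_list (map (\<lambda>y. sum_list (map f (h y))) L)"
  by (induction L) auto

lemma Sf_rec: "Sf (Suc n) x = (1 + n * x) * Sf n x + x * (1 - 2*x) * Sd n x"
proof -
  have "Sf (Suc n) x = sum_list (map (\<lambda>ys. sum_list (map (\<lambda>z. if ssl (Suc n) z then x ^ desr z else 0) (ins_all (Suc n) ys))) (perms n))"
    unfolding Sf_def Pf_def by (simp add: sum_concat_map)
  also have "\<dots> = sum_list (map (\<lambda>ys. if ssl n ys then (desr ys + 1) * x ^ desr ys + (real n - 2 * desr ys) * x ^ (desr ys + 1) else 0) (perms n))"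
  proof (rule arg_cong[where f=sum_list], rule map_cong[OF refl])
    fix ys assume ys: "ys \<in> set (perms n)"
    have "sum_list (map (\<lambda>z. if ssl (Suc n) z then x ^ desr z else 0) (ins_all (Suc n) ys)) =
          sum_list (map (\<lambda>z. if ssl n ys then (if nddr z then x ^ desr z else 0) else 0) (ins_all (Suc n) ys))"
      by (rule arg_cong[where f=sum_list], rule map_cong[OF refl]) (simp add: ssl_step[OF ys])
    also have "\<dots> = (if ssl n ys then (desr ys + 1) * x ^ desr ys + (real n - 2 * desr ys) * x ^ (desr ys + 1) else 0)"
    proof (cases "ssl n ys")
      case True
      have "\<forall>a\<in>set ys. a < Suc n" using ys set_perms by auto
      then show ?thesis using True GS[OF ssl_nddr[OF ys True], of "Suc n" x] length_perms[OF ys] by simp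
    qed simp
    finally show "sum_list (map (\<lambda>z. if ssl (Suc n) z then x ^ desr z else 0) (ins_all (Suc n) ys)) =
      (if ssl n ys then (desr ys + 1) * x ^ desr ys + (real n - 2 * desr ys) * x ^ (desr ys + 1) else 0)" .
  qed
  also have "\<dots> = sum_list (map (\<lambda>ys. (1 + n * x) * (if ssl n ys then x ^ desr ys else 0) + x * (1 - 2*x) * (if ssl n ys then real (desr ys) * x ^ (desr ys - 1) else 0)) (perms n))"
  proof (rule arg_cong[where f=sum_list], rule map_cong[OF refl])
    fix ys
    define D where "D = desr ys"
    have h: "x * (real D * x ^ (D - 1)) = real D * x ^ D"
      by (cases D) auto
    have h2: "x * (1 - 2*x) * (real D * x ^ (D - 1)) = (1-2*x) * (x * (real D * x ^ (D - 1)))"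
      by (simp only: mult.commute mult.left_commute)
    have h3: "(D + 1) * x ^ D + (real n - 2 * D) * x ^ (D + 1) = (1 + n * x) * x ^ D + (1-2*x) * (real D * x ^ D)"
      by (simp add: algebra_simps)
    show "(if ssl n ys then (desr ys + 1) * x ^ desr ys + (real n - 2 * desr ys) * x ^ (desr ys + 1) else 0) =
      (1 + n * x) * (if ssl n ys then x ^ desr ys else 0) + x * (1 - 2*x) * (if ssl n ys then real (desr ys) * x ^ (desr ys - 1) else 0)"
    proof (cases "ssl n ys")
      case True then show ?thesis unfolding D_def[symmetric] if_P[OF True] h2 h using h3 by simp
    qed simp
  qed
  also have "\<dots> = (1 + n * x) * Sf n x + x * (1 - 2*x) * Sd n x"
    unfolding Sf_def Pf_def Sd_def Pd_def by (simp add: sum_list_addf sum_list_const_mult)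
  finally show ?thesis .
qed

lemma Wf_rec: "Wf (Suc n) y = (1 + n * y) * Wf n y + 2 * y * (1 - y) * Wd n y"
proof -
  have "Wf (Suc n) y = sum_list (map (\<lambda>ys. sum_list (map (\<lambda>z. y ^ pkf 0 z) (ins_all (Suc n) ys))) (perms n))"
    unfolding Wf_def Pf_def by (simp add: sum_concat_map)
  also have "\<dots> = sum_list (map (\<lambda>ys. (2 * pkf 0 ys + 1) * y ^ pkf 0 ys + (real n - 2 * pkf 0 ys) * y ^ (pkf 0 ys + 1)) (perms n))"
  proof (rule arg_cong[where f=sum_list], rule map_cong[OF refl])
    fix ys assume ys: "ys \<in> set (perms n)"
    have "\<forall>a\<in>set ys. a < Suc n" using ys set_perms by auto
    then show "sum_list (map (\<lambda>z. y ^ pkf 0 z) (ins_all (Suc n) ys)) =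
      (2 * pkf 0 ys + 1) * y ^ pkf 0 ys + (real n - 2 * pkf 0 ys) * y ^ (pkf 0 ys + 1)"
      using GW[of 0 "Suc n" ys y] length_perms[OF ys] by simp
  qed
  also have "\<dots> = sum_list (map (\<lambda>ys. (1 + n * y) * y ^ pkf 0 ys + 2 * y * (1 - y) * (real (pkf 0 ys) * y ^ (pkf 0 ys - 1))) (perms n))"
  proof (rule arg_cong[where f=sum_list], rule map_cong[OF refl])
    fix ys
    define D where "D = pkf 0 ys"
    have h: "y * (real D * y ^ (D - 1)) = real D * y ^ D"
      by (cases D) auto
    have h2: "2 * y * (1 - y) * (real D * y ^ (D - 1)) = 2 * (1-y) * (y * (real D * y ^ (D - 1)))"
      by (simp only: mult.commute mult.left_commute)
    have h3: "(2 * D + 1) * y ^ D + (real n - 2 * D) * y ^ (D + 1) = (1 + n * y) * y ^ D + 2 * (1-y) * (real D * y ^ D)"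
      by (simp add: algebra_simps)
    show "(2 * pkf 0 ys + 1) * y ^ pkf 0 ys + (real n - 2 * pkf 0 ys) * y ^ (pkf 0 ys + 1) =
      (1 + n * y) * y ^ pkf 0 ys + 2 * y * (1 - y) * (real (pkf 0 ys) * y ^ (pkf 0 ys - 1))"
      unfolding D_def[symmetric] h2 h using h3 by simp
  qed
  also have "\<dots> = (1 + n * y) * Wf n y + 2 * y * (1 - y) * Wd n y"
    unfolding Wf_def Pf_def Wd_def Pd_def by (simp add: sum_list_addf sum_list_const_mult)
  finally show ?thesis .
qed

lemma conv:
  fixes f g :: "nat \<Rightarrow> real"
  shows "(\<Sum>k=0..Suc n. real (Suc n choose k) * f k * g (Suc n - k)) =
    (\<Sum>k=0..n. real (n choose k) * (f (Suc k) * g (n - k) + f k * g (Suc n - k)))"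
proof -
  have A: "(\<Sum>k=0..n. real (n choose k) * f k * g (Suc n - k)) =
     f 0 * g (Suc n) + (\<Sum>k=0..n. real (n choose Suc k) * f (Suc k) * g (n - k))"
  proof -
    have "(\<Sum>k=0..n. real (n choose k) * f k * g (Suc n - k)) = (\<Sum>k=0..Suc n. real (n choose k) * f k * g (Suc n - k))"
      by simp
    also have "\<dots> = f 0 * g (Suc n) + (\<Sum>k=0..n. real (n choose Suc k) * f (Suc k) * g (n - k))"
      by (subst sum.atLeast0_atMost_Suc_shift) simp
    finally show ?thesis .
  qed
  have "(\<Sum>k=0..Suc n. real (Suc n choose k) * f k * g (Suc n - k)) =
     f 0 * g (Suc n) + (\<Sum>k=0..n. real (Suc n choose Suc k) * f (Suc k) * g (n - k))"
    by (subst sum.atLeast0_atMost_Suc_shift) simp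
  also have "\<dots> = f 0 * g (Suc n) + (\<Sum>k=0..n. real (n choose k) * f (Suc k) * g (n - k))
     + (\<Sum>k=0..n. real (n choose Suc k) * f (Suc k) * g (n - k))"
    by (simp add: sum.distrib algebra_simps)
  also have "\<dots> = (\<Sum>k=0..n. real (n choose k) * f (Suc k) * g (n - k)) + (\<Sum>k=0..n. real (n choose k) * f k * g (Suc n - k))"
    using A by simp
  also have "\<dots> = (\<Sum>k=0..n. real (n choose k) * (f (Suc k) * g (n - k) + f k * g (Suc n - k)))"
    by (simp add: sum.distrib algebra_simps)
  finally show ?thesis .
qed

definition Rf :: "nat \<Rightarrow> real \<Rightarrow> real" where
  "Rf n x = (1 / 2 ^ n) * (\<Sum>k=0..n. real (n choose k) * Wf k (2*x) * Wf (n-k) (2*x))"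

definition Rd :: "nat \<Rightarrow> real \<Rightarrow> real" where
  "Rd n x = (1 / 2 ^ n) * (\<Sum>k=0..n. real (n choose k) * (2 * Wd k (2*x) * Wf (n-k) (2*x) + 2 * Wf k (2*x) * Wd (n-k) (2*x)))"

lemma Wf_chain: "((\<lambda>x. Wf k (2*x)) has_real_derivative Wd k (2*x) * 2) (at x)"
  unfolding Wf_def Wd_def
  by (rule DERIV_chain2[OF Pf_deriv]) (auto intro!: derivative_eq_intros)

lemma Rf_deriv: "(Rf n has_real_derivative Rd n x) (at x)"
proof -
  have "((\<lambda>x. (1 / 2 ^ n) * (\<Sum>k=0..n. real (n choose k) * Wf k (2*x) * Wf (n-k) (2*x))) has_real_derivative
     (1 / 2 ^ n) * (\<Sum>k=0..n. real (n choose k) * (Wd k (2*x) * 2 * Wf (n-k) (2*x) + Wf k (2*x) * (Wd (n-k) (2*x) * 2)))) (at x)"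
  proof (intro DERIV_cmult DERIV_sum)
    fix k
    have "((\<lambda>x. real (n choose k) * (Wf k (2*x) * Wf (n-k) (2*x))) has_real_derivative
       real (n choose k) * (Wd k (2*x) * 2 * Wf (n-k) (2*x) + Wd (n-k) (2*x) * 2 * Wf k (2*x))) (at x)"
      by (intro DERIV_cmult DERIV_mult Wf_chain)
    then show "((\<lambda>x. real (n choose k) * Wf k (2*x) * Wf (n-k) (2*x)) has_real_derivative
       real (n choose k) * (Wd k (2*x) * 2 * Wf (n-k) (2*x) + Wf k (2*x) * (Wd (n-k) (2*x) * 2))) (at x)"
      by (simp add: mult.assoc mult.commute mult.left_commute)
  qed
  moreover have "Rd n x = (1 / 2 ^ n) * (\<Sum>k=0..n. real (n choose k) * (Wd k (2*x) * 2 * Wf (n-k) (2*x) + Wf k (2*x) * (Wd (n-k) (2*x) * 2)))"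
    unfolding Rd_def by (simp add: algebra_simps)
  ultimately show ?thesis unfolding Rf_def[abs_def] by simp
qed

lemma Rf_rec: "Rf (Suc n) x = (1 + n * x) * Rf n x + x * (1 - 2*x) * Rd n x"
proof -
  define F where "F k = Wf k (2*x)" for k
  define D where "D k = Wd k (2*x)" for k
  have FS: "F (Suc k) = (1 + 2 * k * x) * F k + 4 * x * (1 - 2*x) * D k" for k
    unfolding F_def D_def Wf_rec by (simp add: algebra_simps)
  have "(\<Sum>k=0..Suc n. real (Suc n choose k) * F k * F (Suc n - k)) =
    (\<Sum>k=0..n. real (n choose k) * (F (Suc k) * F (n - k) + F k * F (Suc n - k)))"
    by (rule conv)
  also have "\<dots> = (\<Sum>k=0..n. (2 + 2 * n * x) * (real (n choose k) * F k * F (n - k)) +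
      2 * x * (1 - 2 * x) * (real (n choose k) * (2 * D k * F (n-k) + 2 * F k * D (n-k))))"
  proof (rule sum.cong[OF refl])
    fix k assume "k \<in> {0..n}"
    then have kn: "k \<le> n" by simp
    then have e: "Suc n - k = Suc (n - k)" "real (n - k) = real n - real k" by auto
    show "real (n choose k) * (F (Suc k) * F (n - k) + F k * F (Suc n - k)) =
      (2 + 2 * n * x) * (real (n choose k) * F k * F (n - k)) +
      2 * x * (1 - 2 * x) * (real (n choose k) * (2 * D k * F (n-k) + 2 * F k * D (n-k)))"
      unfolding e(1) FS e(2) by (simp add: algebra_simps)
  qed
  also have "\<dots> = (2 + 2 * n * x) * (\<Sum>k=0..n. real (n choose k) * F k * F (n - k)) +
      2 * x * (1 - 2 * x) * (\<Sum>k=0..n. real (n choose k) * (2 * D k * F (n-k) + 2 * F k * D (n-k)))"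
    by (simp add: sum.distrib sum_distrib_left)
  finally have main: "(\<Sum>k=0..Suc n. real (Suc n choose k) * F k * F (Suc n - k)) =
      (2 + 2 * n * x) * (\<Sum>k=0..n. real (n choose k) * F k * F (n - k)) +
      2 * x * (1 - 2 * x) * (\<Sum>k=0..n. real (n choose k) * (2 * D k * F (n-k) + 2 * F k * D (n-k)))" .
  define A where "A = (\<Sum>k=0..n. real (n choose k) * F k * F (n - k))"
  define B where "B = (\<Sum>k=0..n. real (n choose k) * (2 * D k * F (n-k) + 2 * F k * D (n-k)))"
  have R1: "Rf (Suc n) x = (1 / 2 ^ Suc n) * ((2 + 2 * n * x) * A + 2 * x * (1 - 2 * x) * B)"
    unfolding Rf_def F_def[symmetric] main A_def B_def by simp
  have R2: "Rf n x = (1 / 2 ^ n) * A" unfolding Rf_def A_def F_def by simp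
  have R3: "Rd n x = (1 / 2 ^ n) * B" unfolding Rd_def B_def F_def D_def by simp
  show ?thesis unfolding R1 R2 R3 by (simp add: field_simps)
qed

lemma SR: "Sf n x = Rf n x"
proof (induction n arbitrary: x)
  case 0
  have "Sf 0 x = 1" unfolding Sf_def Pf_def ssl_def by simp
  moreover have "Wf 0 y = 1" for y unfolding Wf_def Pf_def by simp
  ultimately show ?case unfolding Rf_def by simp
next
  case (Suc n)
  have eq: "Sf n = Rf n" using Suc.IH by auto
  have "(Rf n has_real_derivative Sd n x) (at x)"
    using Pf_deriv[of "ssl n" desr "perms n" x] unfolding Sf_def[symmetric] Sd_def[symmetric] eq .
  then have "Sd n x = Rd n x" using Rf_deriv DERIV_unique by blast
  then show ?case using Sf_rec Rf_rec Suc.IH by simp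
qed

lemma perm_word_bij: "bij_betw (perm_word n) {p. p permutes {1..n}} (set (perms n))"
proof (rule bij_betw_imageI)
  show "inj_on (perm_word n) {p. p permutes {1..n}}"
  proof (rule inj_onI)
    fix p q assume p: "p \<in> {p. p permutes {1..n}}" and q: "q \<in> {p. p permutes {1..n}}"
      and e: "perm_word n p = perm_word n q"
    have "\<forall>i\<in>set [1..<n+1]. p i = q i" using e unfolding perm_word_def map_eq_conv .
    then have pq: "\<forall>i\<in>{1..<n+1}. p i = q i" by (simp only: set_upt)
    then have "p i = q i" for i
      using permutes_not_in[of p "{1..n}" i] permutes_not_in[of q "{1..n}" i] p q
      by (cases "i \<in> {1..n}") (auto simp del: upt_Suc)
    then show "p = q" by auto
  qed
  show "perm_word n ` {p. p permutes {1..n}} = set (perms n)"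
  proof (intro set_eqI iffI)
    fix xs assume "xs \<in> perm_word n ` {p. p permutes {1..n}}"
    then obtain p where p: "p permutes {1..n}" "xs = perm_word n p" by auto
    have su: "set [1..<n+1] = {1..n}" by (simp only: set_upt) auto
    have "distinct xs" unfolding p(2) perm_word_def distinct_map su
      using permutes_inj_on[OF p(1)] by simp
    moreover have "set xs = {1..n}" unfolding p(2) perm_word_def set_map su
      using permutes_image[OF p(1)] .
    ultimately show "xs \<in> set (perms n)" using set_perms by auto
  next
    fix xs assume xs: "xs \<in> set (perms n)"
    then have d: "distinct xs" and s: "set xs = {1..n}" using set_perms by auto
    have l: "length xs = n" using length_perms[OF xs] .
    define p where "p i = (if i \<in> {1..n} then xs ! (i - 1) else i)" for i
    have inj: "inj_on p {1..n}"
    proof (rule inj_onI)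
      fix i j assume "i \<in> {1..n}" "j \<in> {1..n}" "p i = p j"
      then have "xs ! (i-1) = xs ! (j-1)" "i - 1 < length xs" "j - 1 < length xs" using l by (auto simp: p_def)
      then have "i - 1 = j - 1" using nth_eq_iff_index_eq[OF d] by blast
      then show "i = j" using \<open>i \<in> {1..n}\<close> \<open>j \<in> {1..n}\<close> by auto
    qed
    have img: "p ` {1..n} = {1..n}"
    proof -
      have "p ` {1..n} = (\<lambda>i. xs ! (i - 1)) ` {1..n}" by (auto simp: p_def)
      also have "\<dots> = set xs"
      proof (intro set_eqI iffI)
        fix a assume "a \<in> (\<lambda>i. xs ! (i - 1)) ` {1..n}" then show "a \<in> set xs" using l by auto
      next
        fix a assume "a \<in> set xs"
        then obtain j where "j < n" "a = xs ! j" using l by (auto simp: in_set_conv_nth)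
        then show "a \<in> (\<lambda>i. xs ! (i - 1)) ` {1..n}" by (auto intro!: image_eqI[of _ _ "Suc j"])
      qed
      finally show ?thesis using s by simp
    qed
    have pp: "p permutes {1..n}"
    proof (rule bij_imp_permutes)
      show "bij_betw p {1..n} {1..n}" using inj img by (simp add: bij_betw_def)
    qed (auto simp: p_def)
    have "perm_word n p = xs"
      unfolding perm_word_def using l by (intro nth_equalityI) (auto simp: p_def simp del: upt_Suc)
    then show "xs \<in> perm_word n ` {p. p permutes {1..n}}" using pp by blast
  qed
qed

lemma sum_perm: "(\<Sum>p\<in>{p. p permutes {1..n}}. g (perm_word n p)) = sum_list (map g (perms n))"
  using sum.reindex_bij_betw[OF perm_word_bij, of g] sum_list_distinct_conv_sum_set[OF distinct_perms, of g]
  by simp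

lemma S_eq: "S_poly n x = Sf n x"
proof -
  have fin: "finite {p. p permutes {1..n}}" using finite_permutations by auto
  have "{p. p permutes {1..n} \<and> simsun n p} = {p \<in> {p. p permutes {1..n}}. simsun n p}" by simp
  then have "S_poly n x = (\<Sum>p\<in>{p. p permutes {1..n}}. if simsun n p then x ^ des n p else 0)"
    unfolding S_poly_def using sum.inter_filter[OF fin] by simp
  also have "\<dots> = (\<Sum>p\<in>{p. p permutes {1..n}}. (\<lambda>z. if ssl n z then x ^ desr z else 0) (perm_word n p))"
    unfolding simsun_def ssl_def des_def des_word_eq ndd_eq by simp
  also have "\<dots> = Sf n x" using sum_perm[of "\<lambda>z. if ssl n z then x ^ desr z else 0" n] unfolding Sf_def Pf_def by simp
  finally show ?thesis .
qed

lemma W_eq: "W_hat n y = Wf n y"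
proof -
  have "W_hat n y = (\<Sum>p\<in>{p. p permutes {1..n}}. (\<lambda>z. y ^ pkf 0 z) (perm_word n p))"
    unfolding W_hat_def lpk_eq by simp
  also have "\<dots> = Wf n y" using sum_perm[of "\<lambda>z. y ^ pkf 0 z" n] unfolding Wf_def Pf_def by simp
  finally show ?thesis .
qed

theorem mainTheorem2:
  fixes n :: nat and x :: real
  shows "S_poly n x = (1 / 2 ^ n) * (\<Sum>k=0..n. real (n choose k) * W_hat k (2*x) * W_hat (n-k) (2*x))"
  unfolding S_eq W_eq SR Rf_def ..

end
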